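(* Let $\dot G\in\mathcal C_1\cup\mathcal C_4\cup\mathcal C_5$ be a connected, non-complete, $5$-regular and $1$ net-regular SRSG with parameters $(n,5,a,b,c)$. If $(a,b)=(2,1)$, then $\dot G$ is isomorphic to $\dot S^1_{12}$, which has parameters $(12,5,2,1,-2)$.
   Context: A signed graph $\dot G=(G,\sigma)$ is a simple graph $G$ with $\sigma:E(G)\to\{\pm1\}$; adjacency matrix $A_{\dot G}$ has entries $\sigma(v_iv_j)$ for adjacent vertices and $0$ otherwise. Degree and connectedness refer to $G$; net-degree is $d^+(v)-d^-(v)$; $\rho$ net-regular means all net-degrees equal $\rho$. $\dot G$ on $n$ vertices is an SRSG if it is neither homogeneous complete nor edgeless and there are $r\in\mathbb N$, $a,b,c\in\mathbb Z$ with $(A^2_{\dot G})_{ii}=r$, $(A^2_{\dot G})_{ij}=a$ for positive edges, $b$ for negative edges, $c$ for distinct non-adjacent pairs; parameters $(n,r,a,b,c)$. Classes: $\mathcal C_1$: $a=-b$ and (complete, or non-complete with $c\neq0$); $\mathcal C_4$: $a\ne-b$, non-complete, $c=0$; $\mathcal C_5$: $a\neq-b$, non-complete, $c\notin\{0,\frac{a+b}{2}\}$. $\dot S^1_{12}$ has vertex set $\{(s,t):s\in\{1,2,3,4\},t\in\{1,2,3\}\}$, positive edges $(s,t)(s',t)$ for $s\ne s'$, negative edges $(s,t)(s,t')$ for $t\ne t'$, and no other edges. *)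

theory Defs
  imports Main
begin

text \<open>A signed graph on a finite vertex set V is represented by its adjacency
  function A: A x y \<in> {-1,0,1}, symmetric, zero diagonal, zero outside V.
  x,y adjacent iff A x y \<noteq> 0; the sign of the edge xy is A x y.\<close>

definition signed_graph :: "'a set \<Rightarrow> ('a \<Rightarrow> 'a \<Rightarrow> int) \<Rightarrow> bool" where
  "signed_graph V A \<longleftrightarrow> finite V
     \<and> (\<forall>x y. A x y \<in> {-1, 0, 1})
     \<and> (\<forall>x y. A x y = A y x)
     \<and> (\<forall>x. A x x = 0)
     \<and> (\<forall>x y. (x \<notin> V \<or> y \<notin> V) \<longrightarrow> A x y = 0)"

definition adj2 :: "'a set \<Rightarrow> ('a \<Rightarrow> 'a \<Rightarrow> int) \<Rightarrow> 'a \<Rightarrow> 'a \<Rightarrow> int" where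
  "adj2 V A x y = (\<Sum>z\<in>V. A x z * A z y)"

definition sg_complete :: "'a set \<Rightarrow> ('a \<Rightarrow> 'a \<Rightarrow> int) \<Rightarrow> bool" where
  "sg_complete V A \<longleftrightarrow> (\<forall>x\<in>V. \<forall>y\<in>V. x \<noteq> y \<longrightarrow> A x y \<noteq> 0)"

definition homogeneous_complete :: "'a set \<Rightarrow> ('a \<Rightarrow> 'a \<Rightarrow> int) \<Rightarrow> bool" where
  "homogeneous_complete V A \<longleftrightarrow>
     (\<forall>x\<in>V. \<forall>y\<in>V. x \<noteq> y \<longrightarrow> A x y = 1) \<or> (\<forall>x\<in>V. \<forall>y\<in>V. x \<noteq> y \<longrightarrow> A x y = -1)"

definition edgeless :: "'a set \<Rightarrow> ('a \<Rightarrow> 'a \<Rightarrow> int) \<Rightarrow> bool" where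
  "edgeless V A \<longleftrightarrow> (\<forall>x\<in>V. \<forall>y\<in>V. A x y = 0)"

definition SRSG :: "'a set \<Rightarrow> ('a \<Rightarrow> 'a \<Rightarrow> int) \<Rightarrow> nat \<Rightarrow> nat \<Rightarrow> int \<Rightarrow> int \<Rightarrow> int \<Rightarrow> bool" where
  "SRSG V A n r a b c \<longleftrightarrow> signed_graph V A \<and> card V = n
     \<and> \<not> homogeneous_complete V A \<and> \<not> edgeless V A
     \<and> (\<forall>x\<in>V. adj2 V A x x = int r)
     \<and> (\<forall>x\<in>V. \<forall>y\<in>V. A x y = 1 \<longrightarrow> adj2 V A x y = a)
     \<and> (\<forall>x\<in>V. \<forall>y\<in>V. A x y = -1 \<longrightarrow> adj2 V A x y = b)
     \<and> (\<forall>x\<in>V. \<forall>y\<in>V. x \<noteq> y \<and> A x y = 0 \<longrightarrow> adj2 V A x y = c)"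

definition class_C1 :: "'a set \<Rightarrow> ('a \<Rightarrow> 'a \<Rightarrow> int) \<Rightarrow> int \<Rightarrow> int \<Rightarrow> int \<Rightarrow> bool" where
  "class_C1 V A a b c \<longleftrightarrow> a = - b \<and> (sg_complete V A \<or> (\<not> sg_complete V A \<and> c \<noteq> 0))"

definition class_C4 :: "'a set \<Rightarrow> ('a \<Rightarrow> 'a \<Rightarrow> int) \<Rightarrow> int \<Rightarrow> int \<Rightarrow> int \<Rightarrow> bool" where
  "class_C4 V A a b c \<longleftrightarrow> a \<noteq> - b \<and> \<not> sg_complete V A \<and> c = 0"

text \<open>c \<noteq> (a+b)/2 is written as 2c \<noteq> a+b.\<close>
definition class_C5 :: "'a set \<Rightarrow> ('a \<Rightarrow> 'a \<Rightarrow> int) \<Rightarrow> int \<Rightarrow> int \<Rightarrow> int \<Rightarrow> bool" where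
  "class_C5 V A a b c \<longleftrightarrow> a \<noteq> - b \<and> \<not> sg_complete V A \<and> c \<noteq> 0 \<and> 2 * c \<noteq> a + b"

definition sg_connected :: "'a set \<Rightarrow> ('a \<Rightarrow> 'a \<Rightarrow> int) \<Rightarrow> bool" where
  "sg_connected V A \<longleftrightarrow> (\<forall>x\<in>V. \<forall>y\<in>V. (\<lambda>u v. A u v \<noteq> 0)\<^sup>*\<^sup>* x y)"

definition degree :: "'a set \<Rightarrow> ('a \<Rightarrow> 'a \<Rightarrow> int) \<Rightarrow> 'a \<Rightarrow> nat" where
  "degree V A x = card {y\<in>V. A x y \<noteq> 0}"

definition net_degree :: "'a set \<Rightarrow> ('a \<Rightarrow> 'a \<Rightarrow> int) \<Rightarrow> 'a \<Rightarrow> int" where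
  "net_degree V A x = int (card {y\<in>V. A x y = 1}) - int (card {y\<in>V. A x y = -1})"

definition regular :: "'a set \<Rightarrow> ('a \<Rightarrow> 'a \<Rightarrow> int) \<Rightarrow> nat \<Rightarrow> bool" where
  "regular V A k \<longleftrightarrow> (\<forall>x\<in>V. degree V A x = k)"

definition net_regular :: "'a set \<Rightarrow> ('a \<Rightarrow> 'a \<Rightarrow> int) \<Rightarrow> int \<Rightarrow> bool" where
  "net_regular V A \<rho> \<longleftrightarrow> (\<forall>x\<in>V. net_degree V A x = \<rho>)"

definition sg_isomorphic :: "'a set \<Rightarrow> ('a \<Rightarrow> 'a \<Rightarrow> int) \<Rightarrow> 'b set \<Rightarrow> ('b \<Rightarrow> 'b \<Rightarrow> int) \<Rightarrow> bool" where
  "sg_isomorphic V A W B \<longleftrightarrow>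
     (\<exists>f. bij_betw f V W \<and> (\<forall>x\<in>V. \<forall>y\<in>V. B (f x) (f y) = A x y))"

definition S12_V :: "(nat \<times> nat) set" where
  "S12_V = {1..4} \<times> {1..3}"

definition S12_A :: "nat \<times> nat \<Rightarrow> nat \<times> nat \<Rightarrow> int" where
  "S12_A u v = (if u \<in> S12_V \<and> v \<in> S12_V then
       (if snd u = snd v \<and> fst u \<noteq> fst v then 1
        else if fst u = fst v \<and> snd u \<noteq> snd v then -1 else 0)
     else 0)"

end

theory Submission
  imports Defs
begin


lemma sum_ind: "finite S \<Longrightarrow> (\<Sum>y\<in>S. if P y then (k::int) else 0) = k * int (card {y\<in>S. P y})"
  by (simp add: sum.inter_filter[symmetric])

locale srsg5 =
  fixes V :: "'a set" and A :: "'a \<Rightarrow> 'a \<Rightarrow> int" and c :: int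
  assumes sg: "signed_graph V A"
    and r5: "\<forall>x\<in>V. adj2 V A x x = 5"
    and pos: "\<forall>x\<in>V. \<forall>y\<in>V. A x y = 1 \<longrightarrow> adj2 V A x y = 2"
    and neg: "\<forall>x\<in>V. \<forall>y\<in>V. A x y = -1 \<longrightarrow> adj2 V A x y = 1"
    and non: "\<forall>x\<in>V. \<forall>y\<in>V. x \<noteq> y \<and> A x y = 0 \<longrightarrow> adj2 V A x y = c"
    and deg: "\<forall>x\<in>V. card {y\<in>V. A x y \<noteq> 0} = 5"
    and net: "\<forall>x\<in>V. int (card {y\<in>V. A x y = 1}) - int (card {y\<in>V. A x y = -1}) = 1"
begin

lemma fin: "finite V" using sg unfolding signed_graph_def by auto
lemma vals: "A x y = -1 \<or> A x y = 0 \<or> A x y = 1" using sg unfolding signed_graph_def by auto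
lemma symA: "A x y = A y x" using sg unfolding signed_graph_def by auto
lemma diag[simp]: "A x x = 0" using sg unfolding signed_graph_def by auto
lemma outside: "x \<notin> V \<or> y \<notin> V \<Longrightarrow> A x y = 0" using sg unfolding signed_graph_def by auto

lemma cards: assumes "x \<in> V" shows "card {y\<in>V. A x y = 1} = 3" "card {y\<in>V. A x y = -1} = 2"
proof -
  have "{y\<in>V. A x y \<noteq> 0} = {y\<in>V. A x y = 1} \<union> {y\<in>V. A x y = -1}" using vals by auto
  moreover have "card ({y\<in>V. A x y = 1} \<union> {y\<in>V. A x y = -1}) = card {y\<in>V. A x y = 1} + card {y\<in>V. A x y = -1}"
    using fin by (intro card_Un_disjoint) auto
  ultimately have "card {y\<in>V. A x y = 1} + card {y\<in>V. A x y = -1} = 5"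
    using deg assms by auto
  with net assms show "card {y\<in>V. A x y = 1} = 3" "card {y\<in>V. A x y = -1} = 2" by auto
qed

lemma Asplit: "A x y = (if A x y = 1 then 1 else 0) + (if A x y = -1 then -1 else 0)"
  using vals[of x y] by auto
lemma abssplit: "\<bar>A x y\<bar> = (if A x y = 1 then 1 else 0) + (if A x y = -1 then 1 else 0)"
  using vals[of x y] by auto

lemma rowsum: assumes "x \<in> V" shows "(\<Sum>y\<in>V. A x y) = 1"
proof -
  have "(\<Sum>y\<in>V. A x y) = (\<Sum>y\<in>V. (if A x y = 1 then 1 else 0) + (if A x y = -1 then -1 else 0))"
    by (rule sum.cong[OF refl], rule Asplit)
  also have "\<dots> = 3 - 2" using cards[OF assms] fin by (simp add: sum.distrib sum_ind)
  finally show ?thesis by simp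
qed

lemma absrow: assumes "x \<in> V" shows "(\<Sum>y\<in>V. \<bar>A x y\<bar>) = 5"
proof -
  have "(\<Sum>y\<in>V. \<bar>A x y\<bar>) = (\<Sum>y\<in>V. (if A x y = 1 then 1 else 0) + (if A x y = -1 then 1 else 0))"
    by (rule sum.cong[OF refl], rule abssplit)
  also have "\<dots> = 3 + 2" using cards[OF assms] fin by (simp add: sum.distrib sum_ind)
  finally show ?thesis by simp
qed

lemma ceq: assumes "x \<in> V" shows "c * (int (card V) - 6) = -12"
proof -
  have "(\<Sum>y\<in>V. adj2 V A x y) = (\<Sum>z\<in>V. A x z * (\<Sum>y\<in>V. A z y))"
    unfolding adj2_def sum_distrib_left by (rule sum.swap)
  also have "\<dots> = (\<Sum>z\<in>V. A x z)" using rowsum by simp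
  finally have s1: "(\<Sum>y\<in>V. adj2 V A x y) = 1" using rowsum assms by simp
  have "(\<Sum>y\<in>V. adj2 V A x y) = (\<Sum>y\<in>V. c + (if y = x then 5 - c else 0) + (if A x y = 1 then 2 - c else 0) + (if A x y = -1 then 1 - c else 0))"
  proof (rule sum.cong[OF refl])
    fix y assume y: "y \<in> V"
    show "adj2 V A x y = c + (if y = x then 5 - c else 0) + (if A x y = 1 then 2 - c else 0) + (if A x y = -1 then 1 - c else 0)"
      using vals[of x y] r5 pos neg non assms y by (cases "y = x") auto
  qed
  also have "\<dots> = c * int (card V) + (5 - c) * int (card {y\<in>V. y = x}) + (2-c) * 3 + (1 - c) * 2"
    using cards[OF assms] fin by (simp only: sum.distrib sum_ind) simp
  also have "{y\<in>V. y = x} = {x}" using assms by auto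
  finally show ?thesis using s1 by (simp add: algebra_simps)
qed


lemma absmul: "\<bar>A x z\<bar> * \<bar>A x z\<bar> = \<bar>A x z\<bar>" using vals[of x z] by auto

lemma walk: assumes x: "x \<in> V" and y: "y \<in> V" and z: "z \<in> V" and yx: "y \<noteq> x"
  shows "\<bar>A x z * A z y\<bar> = (if A x y \<noteq> 0 then 1 else -1) * (A x z * A z y)"
proof -
  define s where "s y = (if A x y \<noteq> 0 then 1 else (-1::int))" for y
  define F where "F y z = (if y = x then 0 else \<bar>A x z * A z y\<bar> - s y * (A x z * A z y))" for y z
  have S1: "(\<Sum>y\<in>V. \<Sum>z\<in>V. (if y = x then 0 else \<bar>A x z\<bar> * \<bar>A z y\<bar>)) = 20"
  proof -
    have "(\<Sum>y\<in>V. \<Sum>z\<in>V. (if y = x then 0 else \<bar>A x z\<bar> * \<bar>A z y\<bar>))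
        = (\<Sum>z\<in>V. \<Sum>y\<in>V. (if y = x then 0 else \<bar>A x z\<bar> * \<bar>A z y\<bar>))"
      by (rule sum.swap)
    also have "\<dots> = (\<Sum>z\<in>V. \<bar>A x z\<bar> * 5 - \<bar>A x z\<bar>)"
    proof (rule sum.cong[OF refl])
      fix z assume zV: "z \<in> V"
      have "(\<Sum>y\<in>V. (if y = x then 0 else \<bar>A x z\<bar> * \<bar>A z y\<bar>))
          = (\<Sum>y\<in>V. \<bar>A x z\<bar> * \<bar>A z y\<bar> - (if y = x then \<bar>A x z\<bar> * \<bar>A z x\<bar> else 0))"
        by (rule sum.cong) auto
      also have "\<dots> = \<bar>A x z\<bar> * 5 - \<bar>A x z\<bar> * \<bar>A z x\<bar>"
        using fin x absrow[OF zV] by (simp add: sum_subtractf sum_distrib_left[symmetric])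
      also have "\<bar>A z x\<bar> = \<bar>A x z\<bar>" using symA by simp
      finally show "(\<Sum>y\<in>V. (if y = x then 0 else \<bar>A x z\<bar> * \<bar>A z y\<bar>)) = \<bar>A x z\<bar> * 5 - \<bar>A x z\<bar>"
        using absmul by simp
    qed
    also have "\<dots> = (\<Sum>z\<in>V. 4 * \<bar>A x z\<bar>)" by simp
    also have "\<dots> = 20" using absrow[OF x] by (simp add: sum_distrib_left[symmetric])
    finally show ?thesis .
  qed
  have S2: "(\<Sum>y\<in>V. (if y = x then 0 else s y * adj2 V A x y)) = 20"
  proof -
    have "(\<Sum>y\<in>V. (if y = x then 0 else s y * adj2 V A x y)) =
      (\<Sum>y\<in>V. (if A x y = 1 then 2 + c else 0) + (if A x y = -1 then 1 + c else 0) + (- c) + (if y = x then c else 0))"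
    proof (rule sum.cong[OF refl])
      fix y assume yV: "y \<in> V"
      show "(if y = x then 0 else s y * adj2 V A x y) = (if A x y = 1 then 2 + c else 0) + (if A x y = -1 then 1 + c else 0) + (- c) + (if y = x then c else 0)"
        using vals[of x y] pos neg non x yV unfolding s_def by (cases "y = x") auto
    qed
    also have "\<dots> = (2 + c) * 3 + (1 + c) * 2 - c * int (card V) + c"
    proof -
      have xx: "{y\<in>V. y = x} = {x}" using x by auto
      show ?thesis using cards[OF x] fin x
        by (simp only: sum.distrib sum_ind sum_constant xx) (simp add: algebra_simps)
    qed
    also have "\<dots> = 20" using ceq[OF x] by (simp add: algebra_simps)
    finally show ?thesis .
  qed
  have "(\<Sum>y\<in>V. \<Sum>z\<in>V. F y z) = (\<Sum>y\<in>V. \<Sum>z\<in>V. (if y = x then 0 else \<bar>A x z\<bar> * \<bar>A z y\<bar>))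
     - (\<Sum>y\<in>V. (if y = x then 0 else s y * adj2 V A x y))"
    unfolding F_def adj2_def sum_subtractf[symmetric]
    by (rule sum.cong[OF refl]) (auto simp: sum_subtractf sum_distrib_left abs_mult)
  hence "(\<Sum>y\<in>V. \<Sum>z\<in>V. F y z) = 0" using S1 S2 by simp
  moreover have Fnn: "F y z \<ge> 0" for y z unfolding F_def s_def by auto
  ultimately have "\<forall>y\<in>V. (\<Sum>z\<in>V. F y z) = 0"
    using fin by (subst (asm) sum_nonneg_eq_0_iff) (auto intro: sum_nonneg)
  hence "(\<Sum>z\<in>V. F y z) = 0" using y by auto
  hence "F y z = 0" using fin z Fnn by (subst (asm) sum_nonneg_eq_0_iff) auto
  thus ?thesis using yx unfolding F_def s_def by simp
qed


lemma D1: assumes "x \<in> V" "y \<in> V" "z \<in> V" "A z x = 1" "A z y = 1" "x \<noteq> y" shows "A x y = 1"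
proof -
  have "A x y \<noteq> 0" using walk[of x y z] assms symA[of z x] by (auto split: if_splits)
  moreover have "z \<noteq> y" using assms by auto
  ultimately show ?thesis using walk[of y z x] assms symA[of z x] symA[of y x] symA[of z y] vals[of x y]
    by (auto split: if_splits)
qed

lemma D2: assumes "x \<in> V" "y \<in> V" "z \<in> V" "A z x = -1" "A z y = -1" "x \<noteq> y" shows "A x y = -1"
proof -
  have "A x y \<noteq> 0" using walk[of x y z] assms symA[of z x] by (auto split: if_splits)
  moreover have "z \<noteq> y" using assms by auto
  ultimately show ?thesis using walk[of y z x] assms symA[of z x] symA[of y x] symA[of z y] vals[of x y]
    by (auto split: if_splits)
qed

lemma D3: assumes "x \<in> V" "y \<in> V" "z \<in> V" "A z x = 1" "A z y = -1" shows "A x y = 0"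
proof -
  have "x \<noteq> y" using assms by auto
  thus ?thesis using walk[of x y z] assms symA[of z x] by (auto split: if_splits)
qed

definition Pc where "Pc v = {w\<in>V. w = v \<or> A v w = 1}"
definition Nc where "Nc v = {w\<in>V. w = v \<or> A v w = -1}"

lemma Pc_eq: assumes "v \<in> V" "w \<in> V" shows "Pc w = Pc v \<longleftrightarrow> w = v \<or> A v w = 1"
proof
  assume "Pc w = Pc v"
  moreover have "w \<in> Pc w" using assms unfolding Pc_def by auto
  ultimately show "w = v \<or> A v w = 1" unfolding Pc_def by auto
next
  have *: "Pc w \<subseteq> Pc v" if "v \<in> V" "w \<in> V" "A v w = 1" for v w
    unfolding Pc_def using that D1[of v _ w] symA[of v w] by auto
  assume "w = v \<or> A v w = 1"
  thus "Pc w = Pc v" using *[of v w] *[of w v] assms symA[of v w] by auto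
qed

lemma Nc_eq: assumes "v \<in> V" "w \<in> V" shows "Nc w = Nc v \<longleftrightarrow> w = v \<or> A v w = -1"
proof
  assume "Nc w = Nc v"
  moreover have "w \<in> Nc w" using assms unfolding Nc_def by auto
  ultimately show "w = v \<or> A v w = -1" unfolding Nc_def by auto
next
  have *: "Nc w \<subseteq> Nc v" if "v \<in> V" "w \<in> V" "A v w = -1" for v w
    unfolding Nc_def using that D2[of v _ w] symA[of v w] by auto
  assume "w = v \<or> A v w = -1"
  thus "Nc w = Nc v" using *[of v w] *[of w v] assms symA[of v w] by auto
qed

lemma card_Pc: assumes "v \<in> V" shows "card (Pc v) = 4"
proof -
  have "Pc v = insert v {w\<in>V. A v w = 1}" using assms unfolding Pc_def by auto
  thus ?thesis using cards[OF assms] fin by simp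
qed

lemma card_Nc: assumes "v \<in> V" shows "card (Nc v) = 3"
proof -
  have "Nc v = insert v {w\<in>V. A v w = -1}" using assms unfolding Nc_def by auto
  thus ?thesis using cards[OF assms] fin by simp
qed

end

lemma partition_card:
  assumes fin: "finite V" and sub: "\<And>v. v \<in> V \<Longrightarrow> v \<in> cl v \<and> cl v \<subseteq> V"
    and ck: "\<And>v. v \<in> V \<Longrightarrow> card (cl v) = k"
    and eq: "\<And>v w. v \<in> V \<Longrightarrow> w \<in> V \<Longrightarrow> w \<in> cl v \<Longrightarrow> cl w = cl v"
  shows "card V = k * card (cl ` V)"
proof -
  have U: "\<Union> (cl ` V) = V" using sub by blast
  have "pairwise disjnt (cl ` V)"
  proof (rule pairwiseI)
    fix X Y assume "X \<in> cl ` V" "Y \<in> cl ` V" "X \<noteq> Y"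
    then obtain v w where vw: "v \<in> V" "w \<in> V" "X = cl v" "Y = cl w" by auto
    show "disjnt X Y"
    proof (rule ccontr)
      assume "\<not> disjnt X Y"
      then obtain u where "u \<in> cl v" "u \<in> cl w" using vw unfolding disjnt_def by auto
      hence "cl u = cl v" "cl u = cl w" using eq sub vw by blast+
      thus False using vw \<open>X \<noteq> Y\<close> by simp
    qed
  qed
  moreover have "\<And>X. X \<in> cl ` V \<Longrightarrow> finite X" using sub fin finite_subset by blast
  ultimately have "card (\<Union> (cl ` V)) = sum card (cl ` V)" by (rule card_Union_disjoint)
  also have "\<dots> = sum (\<lambda>_. k) (cl ` V)" using ck by (intro sum.cong) auto
  finally show ?thesis using U by simp
qed


lemma arith12: fixes c :: int and n p q :: nat
  assumes "c * (int n - 6) = -12" "n = 4 * p" "n = 3 * q" "n > 0" shows "n = 12"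
proof -
  have "3 dvd 4 * p" using assms by (metis dvd_triv_left)
  hence "3 dvd p" by presburger
  then obtain j where j: "p = 3 * j" by auto
  hence n: "n = 12 * j" using assms by simp
  have j1: "j \<ge> 1" using n assms by auto
  have e: "c * (2 * int j - 1) = -2" using assms(1) n by (simp add: algebra_simps)
  have "j = 1"
  proof (rule ccontr)
    assume "j \<noteq> 1" hence "2 * int j - 1 \<ge> 3" using j1 by simp
    moreover have "c \<noteq> 0" using e by auto
    ultimately have "1 * 3 \<le> \<bar>c\<bar> * \<bar>2 * int j - 1\<bar>"
      by (intro mult_mono) auto
    hence "\<bar>c * (2 * int j - 1)\<bar> \<ge> 3" by (simp add: abs_mult)
    thus False using e by simp
  qed
  thus ?thesis using n by simp
qed

context srsg5 begin

lemma struct12: assumes x0: "x0 \<in> V"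
  shows "card V = 12" "card (Pc ` V) = 3" "card (Nc ` V) = 4"
proof -
  have P: "card V = 4 * card (Pc ` V)"
    proof (rule partition_card[OF fin])
    fix v assume "v \<in> V" thus "v \<in> Pc v \<and> Pc v \<subseteq> V" unfolding Pc_def by auto
  next
    fix v assume "v \<in> V" thus "card (Pc v) = 4" by (rule card_Pc)
  next
    fix v w assume "v \<in> V" "w \<in> V" "w \<in> Pc v" thus "Pc w = Pc v"
      using Pc_eq unfolding Pc_def by blast
  qed
  have N: "card V = 3 * card (Nc ` V)"
    proof (rule partition_card[OF fin])
    fix v assume "v \<in> V" thus "v \<in> Nc v \<and> Nc v \<subseteq> V" unfolding Nc_def by auto
  next
    fix v assume "v \<in> V" thus "card (Nc v) = 3" by (rule card_Nc)
  next
    fix v w assume "v \<in> V" "w \<in> V" "w \<in> Nc v" thus "Nc w = Nc v"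
      using Nc_eq unfolding Nc_def by blast
  qed
  have "card V > 0" using x0 fin card_gt_0_iff by blast
  thus c12: "card V = 12" using arith12[OF ceq[OF x0] P N] by simp
  show "card (Pc ` V) = 3" "card (Nc ` V) = 4" using P N c12 by auto
qed

lemma iso: assumes x0: "x0 \<in> V" shows "sg_isomorphic V A S12_V S12_A"
proof -
  note st = struct12[OF x0]
  obtain gP where gP: "bij_betw gP (Pc ` V) {1..3::nat}"
    using finite_same_card_bij[of "Pc ` V" "{1..3::nat}"] st fin by auto
  obtain gN where gN: "bij_betw gN (Nc ` V) {1..4::nat}"
    using finite_same_card_bij[of "Nc ` V" "{1..4::nat}"] st fin by auto
  define f where "f v = (gN (Nc v), gP (Pc v))" for v
  have fin_in: "f v \<in> S12_V" if "v \<in> V" for v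
    using that gP gN unfolding f_def S12_V_def bij_betw_def by auto
  have sndeq: "snd (f v) = snd (f w) \<longleftrightarrow> v = w \<or> A v w = 1" if "v \<in> V" "w \<in> V" for v w
  proof -
    have "snd (f v) = snd (f w) \<longleftrightarrow> Pc v = Pc w"
      using gP that unfolding f_def bij_betw_def inj_on_def by auto
    thus ?thesis using Pc_eq[OF that] by auto
  qed
  have fsteq: "fst (f v) = fst (f w) \<longleftrightarrow> v = w \<or> A v w = -1" if "v \<in> V" "w \<in> V" for v w
  proof -
    have "fst (f v) = fst (f w) \<longleftrightarrow> Nc v = Nc w"
      using gN that unfolding f_def bij_betw_def inj_on_def by auto
    thus ?thesis using Nc_eq[OF that] by auto
  qed
  have inj: "inj_on f V"
  proof (rule inj_onI)
    fix v w assume "v \<in> V" "w \<in> V" "f v = f w"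
    thus "v = w" using sndeq[of v w] fsteq[of v w] by auto
  qed
  have "f ` V = S12_V"
  proof (rule card_subset_eq)
    show "finite S12_V" unfolding S12_V_def by simp
    show "f ` V \<subseteq> S12_V" using fin_in by auto
    show "card (f ` V) = card S12_V" using card_image[OF inj] st unfolding S12_V_def by simp
  qed
  hence bij: "bij_betw f V S12_V" using inj unfolding bij_betw_def by simp
  have "S12_A (f v) (f w) = A v w" if "v \<in> V" "w \<in> V" for v w
  proof -
    have "S12_A (f v) (f w) = (if snd (f v) = snd (f w) \<and> fst (f v) \<noteq> fst (f w) then 1
       else if fst (f v) = fst (f w) \<and> snd (f v) \<noteq> snd (f w) then -1 else 0)"
      using fin_in[OF that(1)] fin_in[OF that(2)] unfolding S12_A_def by simp
    also have "\<dots> = (if (v = w \<or> A v w = 1) \<and> \<not> (v = w \<or> A v w = -1) then 1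
       else if (v = w \<or> A v w = -1) \<and> \<not> (v = w \<or> A v w = 1) then -1 else 0)"
      by (simp only: sndeq[OF that] fsteq[OF that])
    also have "\<dots> = A v w" using vals[of v w] by (cases "v = w") auto
    finally show ?thesis .
  qed
  thus ?thesis using bij unfolding sg_isomorphic_def by blast
qed

end


lemma S12_sym: "S12_A x y = S12_A y x"
proof -
  have 1: "(snd x = snd y \<and> fst x \<noteq> fst y) = (snd y = snd x \<and> fst y \<noteq> fst x)" by auto
  have 2: "(fst x = fst y \<and> snd x \<noteq> snd y) = (fst y = fst x \<and> snd y \<noteq> snd x)" by auto
  have 3: "(x \<in> S12_V \<and> y \<in> S12_V) = (y \<in> S12_V \<and> x \<in> S12_V)" by auto
  show ?thesis unfolding S12_A_def by (simp only: 1 2 3)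
qed

lemma S12_sg: "signed_graph S12_V S12_A" unfolding signed_graph_def
proof (intro conjI allI impI)
  show "finite S12_V" unfolding S12_V_def by simp
  fix x y
  show "S12_A x y \<in> {-1, 0, 1}" unfolding S12_A_def by simp
  show "S12_A x y = S12_A y x" by (rule S12_sym)
  show "S12_A x x = 0" unfolding S12_A_def by simp
  assume "x \<notin> S12_V \<or> y \<notin> S12_V" thus "S12_A x y = 0"
    unfolding S12_A_def by (simp only: de_Morgan_conj[symmetric] if_False)
qed

lemma S12_SRSG: "SRSG S12_V S12_A 12 5 2 1 (-2)"
  unfolding SRSG_def
proof (intro conjI)
  show "signed_graph S12_V S12_A" by (rule S12_sg)
qed (unfold homogeneous_complete_def edgeless_def adj2_def S12_A_def S12_V_def; code_simp)+

theorem lemma3p5: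
  fixes V :: "'a set" and A :: "'a \<Rightarrow> 'a \<Rightarrow> int"
    and n :: nat and a b c :: int
  assumes "SRSG V A n 5 a b c"
    and "class_C1 V A a b c \<or> class_C4 V A a b c \<or> class_C5 V A a b c"
    and "sg_connected V A"
    and "\<not> sg_complete V A"
    and "regular V A 5"
    and "net_regular V A 1"
    and "(a, b) = (2, 1)"
  shows "sg_isomorphic V A S12_V S12_A \<and> SRSG S12_V S12_A 12 5 2 1 (-2)"
proof -
  have ab: "a = 2" "b = 1" using assms(7) by auto
  interpret srsg5 V A c
  proof
    show "signed_graph V A" using assms(1) unfolding SRSG_def by auto
    show "\<forall>x\<in>V. adj2 V A x x = 5" using assms(1) unfolding SRSG_def by auto
    show "\<forall>x\<in>V. \<forall>y\<in>V. A x y = 1 \<longrightarrow> adj2 V A x y = 2" using assms(1) ab unfolding SRSG_def by auto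
    show "\<forall>x\<in>V. \<forall>y\<in>V. A x y = -1 \<longrightarrow> adj2 V A x y = 1" using assms(1) ab unfolding SRSG_def by auto
    show "\<forall>x\<in>V. \<forall>y\<in>V. x \<noteq> y \<and> A x y = 0 \<longrightarrow> adj2 V A x y = c" using assms(1) unfolding SRSG_def by auto
    show "\<forall>x\<in>V. card {y\<in>V. A x y \<noteq> 0} = 5" using assms(5) unfolding regular_def degree_def by auto
    show "\<forall>x\<in>V. int (card {y\<in>V. A x y = 1}) - int (card {y\<in>V. A x y = -1}) = 1"
      using assms(6) unfolding net_regular_def net_degree_def by auto
  qed
  obtain x0 where "x0 \<in> V" using assms(1) unfolding SRSG_def edgeless_def by auto
  thus ?thesis using iso S12_SRSG by blast
qed

end
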